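(* For every $0<\Delta<1/6$, the dithered KLT encoder $f_\Delta$ satisfies $D(f_\Delta)\le\Delta$, i.e. $$E\Big[\int_0^1 \big(X(t) - E[X(t)\mid f_\Delta(X), U_1,\ldots,U_K]\big)^2\,dt\Big]\le \Delta.$$
   Context: Let $U$ be uniformly distributed on $[0,1]$ and let the sawbridge be $X(t) = t-\mathbf{1}(t\ge U)$, $t\in[0,1]$. Let $\phi_k(t)=\sqrt2\sin(\pi k t)$ and $Y_k = \int_0^1 X(t)\phi_k(t)\,dt$ (the Karhunen–Loève coefficients; $E[Y_k^2]=\lambda_k = 1/(\pi^2k^2)$). Let $\gamma>0$ be the unique solution of $\arctan(\pi\sqrt{\gamma}) = \frac{1}{\pi\sqrt{\gamma}}$. Given $\Delta$, set $D = \frac{\Delta^2\pi^2}{4}$, $K = \big\lceil \frac{1}{\pi\sqrt D}\big\rceil$, and $\delta = \frac{\sqrt{12\gamma}}{K}$. Let $U_1,\ldots,U_K$ be i.i.d. uniform on $[-1/2,1/2]$, independent of $U$ (side randomness available to the decoder). The stochastic encoder is $f_\Delta(X) = \big(\lfloor Y_\ell/\delta + U_\ell\rceil\big)_{\ell=1}^K$, where $\lfloor\cdot\rceil$ denotes rounding to the nearest integer. Its distortion $D(f_\Delta)$ is the mean squared error in $L^2[0,1]$ of the best reconstruction of $X$ given $f_\Delta(X)$ and $U_1,\ldots,U_K$. *)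

theory Defs
  imports "HOL-Probability.Probability"
begin

definition sawbridge :: "real \<Rightarrow> real \<Rightarrow> real" where
  "sawbridge u t = t - (if t \<ge> u then 1 else 0)"

definition kl_phi :: "nat \<Rightarrow> real \<Rightarrow> real" where
  "kl_phi k t = sqrt 2 * sin (pi * real k * t)"

definition kl_coeff :: "nat \<Rightarrow> real \<Rightarrow> real" where
  "kl_coeff k u = (LBINT t=0..1. sawbridge u t * kl_phi k t)"

definition gamma_saw :: real where
  "gamma_saw = (THE g. g > 0 \<and> arctan (pi * sqrt g) = 1 / (pi * sqrt g))"

definition D_par :: "real \<Rightarrow> real" where
  "D_par \<Delta> = \<Delta>^2 * pi^2 / 4"

definition K_par :: "real \<Rightarrow> nat" where
  "K_par \<Delta> = nat \<lceil>1 / (pi * sqrt (D_par \<Delta>))\<rceil>"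

definition delta_par :: "real \<Rightarrow> real" where
  "delta_par \<Delta> = sqrt (12 * gamma_saw) / real (K_par \<Delta>)"

(* Encoder output: (round(Y_l/delta + U_l))_{l=1..K}; d is the dither vector (U_1,...,U_K).
   round x = floor (x + 1/2) is rounding to the nearest integer. *)
definition encoder :: "real \<Rightarrow> real \<Rightarrow> (nat \<Rightarrow> real) \<Rightarrow> (nat \<Rightarrow> int)" where
  "encoder \<Delta> u d = restrict (\<lambda>l. round (kl_coeff l u / delta_par \<Delta> + d l)) {1..K_par \<Delta>}"

definition saw_space :: "real \<Rightarrow> (real \<times> (nat \<Rightarrow> real)) measure" where
  "saw_space \<Delta> = uniform_measure lborel {0..1} \<Otimes>\<^sub>M
      (\<Pi>\<^sub>M l\<in>{1..K_par \<Delta>}. uniform_measure lborel {-1/2..1/2})"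

(* Decoders: measurable reconstructions x_hat(t) = g c d t from the code c and the
   dither d (side information at the decoder). *)
definition decoders :: "real \<Rightarrow> ((nat \<Rightarrow> int) \<Rightarrow> (nat \<Rightarrow> real) \<Rightarrow> real \<Rightarrow> real) set" where
  "decoders \<Delta> = {g. (\<lambda>((c, d), t). g c d t) \<in> borel_measurable
      (((\<Pi>\<^sub>M l\<in>{1..K_par \<Delta>}. count_space UNIV) \<Otimes>\<^sub>M (\<Pi>\<^sub>M l\<in>{1..K_par \<Delta>}. lborel)) \<Otimes>\<^sub>M lborel)}"

definition mse :: "real \<Rightarrow> ((nat \<Rightarrow> int) \<Rightarrow> (nat \<Rightarrow> real) \<Rightarrow> real \<Rightarrow> real) \<Rightarrow> ennreal" where
  "mse \<Delta> g = (\<integral>\<^sup>+ \<omega>. (\<integral>\<^sup>+ t\<in>{0..1}.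
      ennreal ((sawbridge (fst \<omega>) t - g (encoder \<Delta> (fst \<omega>) (snd \<omega>)) (snd \<omega>) t)^2) \<partial>lborel)
      \<partial>saw_space \<Delta>)"

definition distortion :: "real \<Rightarrow> ennreal" where
  "distortion \<Delta> = (INF g\<in>decoders \<Delta>. mse \<Delta> g)"

end

theory Submission
  imports Defs
begin


lemma xarctan_mono: "0 < x \<Longrightarrow> x < y \<Longrightarrow> x * arctan x < y * arctan y"
proof -
  assume a: "0 < x" "x < y"
  have "arctan x < arctan y" using a by (simp add: arctan_less_iff)
  moreover have "0 < arctan x" using a by simp
  ultimately show ?thesis using a mult_strict_mono[of x y "arctan x" "arctan y"] by auto
qed

lemma gamma_props: "gamma_saw > 0 \<and> arctan (pi * sqrt gamma_saw) = 1 / (pi * sqrt gamma_saw)"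
proof -
  have ex: "\<exists>x\<ge>1. x \<le> 2 \<and> x * arctan x = 1"
  proof (rule IVT)
    show "1 * arctan 1 \<le> (1::real)" using arctan_one pi_less_4 by simp
    have "arctan 1 < arctan (2::real)" by (subst arctan_less_iff) simp
    hence "pi/4 < arctan 2" unfolding arctan_one .
    thus "(1::real) \<le> 2 * arctan 2" using pi_gt3 by linarith
    show "(1::real) \<le> 2" by simp
    show "\<forall>x. 1 \<le> x \<and> x \<le> 2 \<longrightarrow> isCont (\<lambda>x. x * arctan x) x"
      by (auto intro!: continuous_intros isCont_arctan)
  qed
  then obtain x :: real where x: "1 \<le> x" "x * arctan x = 1" by auto
  define g where "g = (x/pi)^2"
  have sg: "sqrt g = x/pi" using x by (simp add: g_def)
  have px: "pi * sqrt g = x" using sg by simp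
  have x0: "x > 0" using x by simp
  have g0: "g > 0" using x0 by (simp add: g_def)
  have ax: "arctan x = 1 / x" using x(2) x0 by (simp add: eq_divide_eq mult.commute)
  have P: "g > 0 \<and> arctan (pi * sqrt g) = 1 / (pi * sqrt g)"
    unfolding px using g0 ax by simp
  have U: "h = g" if h: "h > 0 \<and> arctan (pi * sqrt h) = 1 / (pi * sqrt h)" for h
  proof -
    define y where "y = pi * sqrt h"
    have y0: "y > 0" using h by (simp add: y_def)
    have "y * arctan y = 1" using h y0 by (simp add: y_def field_simps)
    have xy: "x = y"
    proof (rule ccontr)
      assume "x \<noteq> y"
      hence "x < y \<or> y < x" by auto
      thus False using xarctan_mono[of x y] xarctan_mono[of y x] x y0 \<open>y * arctan y = 1\<close> by auto
    qed
    have "sqrt h = x / pi" using xy by (simp add: y_def)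
    moreover have "h = (sqrt h)^2" using h by simp
    ultimately have "h = (x/pi)^2" by simp
    thus ?thesis by (simp add: g_def)
  qed
  have "gamma_saw = g" unfolding gamma_saw_def
    by (rule the_equality) (rule P, erule U)
  thus ?thesis using P by simp
qed

lemma arctan_diff_ge:
  fixes a b :: real assumes "0 \<le> a" "a \<le> b"
  shows "(b - a) / (1 + b^2) \<le> arctan b - arctan a"
proof (cases "a = b")
  case True thus ?thesis by simp
next
  case False
  hence ab: "a < b" using assms by simp
  obtain z where z: "a < z" "z < b" "arctan b - arctan a = (b - a) * inverse (1 + z^2)"
    using MVT2[OF ab, of arctan "\<lambda>x. inverse (1 + x^2)"] DERIV_arctan by blast
  have "z^2 \<le> b^2" using z assms by (intro power_mono) auto
  hence "1 / (1 + b^2) \<le> inverse (1 + z^2)"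
    by (simp add: inverse_eq_divide frac_le add_pos_nonneg)
  hence "(b - a) * (1 / (1 + b^2)) \<le> (b - a) * inverse (1 + z^2)"
    using ab by (intro mult_left_mono) auto
  thus ?thesis using z by simp
qed


lemma wiener_sum:
  fixes K :: nat and g :: real
  assumes K: "K \<ge> 1" and g: "g > 0" and fp: "arctan (pi * sqrt g) = 1 / (pi * sqrt g)"
  shows "(\<Sum>l=1..K. g / ((real K)^2 + g * pi^2 * (real l)^2)) \<le> 1 / (pi^2 * real K)"
proof -
  define c where "c = pi * sqrt g"
  have c0: "c > 0" using g by (simp add: c_def)
  have c2: "c^2 = pi^2 * g" using g by (simp add: c_def power_mult_distrib)
  define f where "f l = arctan (c * real l / real K)" for l :: nat
  have Kp: "real K > 0" using K by simp
  have trm: "g / ((real K)^2 + g * pi^2 * (real l)^2) \<le> (sqrt g / (pi * real K)) * (f l - f (l - 1))"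
    if l: "l \<ge> 1" for l
  proof -
    have "(c * real l / real K - c * real (l - 1) / real K) / (1 + (c * real l / real K)^2) \<le> f l - f (l - 1)"
      unfolding f_def using c0 Kp l
      by (intro arctan_diff_ge) (auto simp: divide_right_mono mult_left_mono)
    moreover have "(c * real l / real K - c * real (l - 1) / real K) / (1 + (c * real l / real K)^2)
        = c * real K / ((real K)^2 + c^2 * (real l)^2)"
      using l Kp by (simp add: of_nat_diff field_simps power2_eq_square)
    ultimately have A: "c * real K / ((real K)^2 + c^2 * (real l)^2) \<le> f l - f (l - 1)" by simp
    have sp: "sqrt g / (pi * real K) \<ge> 0" using g Kp by simp
    have "g / ((real K)^2 + g * pi^2 * (real l)^2) = (sqrt g / (pi * real K)) * (c * real K / ((real K)^2 + c^2 * (real l)^2))"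
      using g Kp by (simp add: c2 c_def field_simps power2_eq_square)
    also have "\<dots> \<le> (sqrt g / (pi * real K)) * (f l - f (l - 1))"
      using A sp by (rule mult_left_mono)
    finally show ?thesis .
  qed
  have tele: "(\<Sum>l=1..n. (f l - f (l - 1))) = f n - f 0" for n
    by (induction n) (auto simp: Suc_le_eq)
  have "(\<Sum>l=1..K. g / ((real K)^2 + g * pi^2 * (real l)^2)) \<le> (\<Sum>l=1..K. (sqrt g / (pi * real K)) * (f l - f (l - 1)))"
    by (intro sum_mono trm) auto
  also have "\<dots> = (sqrt g / (pi * real K)) * (\<Sum>l=1..K. (f l - f (l - 1)))"
    by (rule sum_distrib_left[symmetric])
  also have "\<dots> = (sqrt g / (pi * real K)) * (f K - f 0)"
    by (simp only: tele)
  also have "f K - f 0 = 1 / c" using Kp fp by (simp add: f_def c_def)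
  also have "(sqrt g / (pi * real K)) * (1 / c) = 1 / (pi^2 * real K)"
    using g Kp by (simp add: c_def field_simps power2_eq_square)
  finally show ?thesis .
qed

lemma tail_sq:
  fixes K :: nat assumes K: "K \<ge> 1"
  shows "pi^2/6 \<le> (\<Sum>l=1..K. 1 / (real l)^2) + 1 / real K"
proof -
  have ind: "(\<Sum>n<N. 1 / (real n + 1)^2) \<le> (\<Sum>n<K. 1 / (real n + 1)^2) + 1 / real K - 1 / real N"
    if "N \<ge> K" for N
    using that
  proof (induction N rule: dec_induct)
    case base thus ?case by simp
  next
    case (step N)
    have NK: "real N \<ge> 1" using step K by simp
    have "1 / (real N + 1)^2 \<le> 1 / (real N * (real N + 1))"
      using NK by (intro divide_left_mono) (auto simp: power2_eq_square)
    also have "\<dots> = 1 / real N - 1 / (real N + 1)"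
      using NK by (simp add: field_simps)
    finally have "1 / (real N + 1)^2 \<le> 1 / real N - 1 / (real N + 1)" .
    have e: "(\<Sum>n<Suc N. 1 / (real n + 1)^2) = (\<Sum>n<N. 1 / (real n + 1)^2) + 1/(real N+1)^2" by simp
    have e2: "1 / real (Suc N) = 1/(real N + 1)" by simp
    show ?case unfolding e e2 using step.IH \<open>1 / (real N + 1)^2 \<le> 1 / real N - 1 / (real N + 1)\<close> by linarith
  qed
  have lim: "(\<lambda>N. \<Sum>n<N. 1 / (real n + 1)^2) \<longlonglongrightarrow> pi^2/6"
    using inverse_squares_sums by (simp add: sums_def add.commute)
  have lim2: "(\<lambda>N. (\<Sum>n<K. 1 / (real n + 1)^2) + 1 / real K - 1 / real N) \<longlonglongrightarrow> (\<Sum>n<K. 1 / (real n + 1)^2) + 1 / real K - 0"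
    by (intro tendsto_intros lim_const_over_n)
  have "pi^2/6 \<le> (\<Sum>n<K. 1 / (real n + 1)^2) + 1 / real K - 0"
    by (rule LIMSEQ_le[OF lim lim2]) (use ind in blast)
  also have "(\<Sum>n<K. 1 / (real n + 1)^2) = (\<Sum>l=1..K. 1 / (real l)^2)"
    by (induction K) (auto simp: sum.cl_ivl_Suc add.commute)
  finally show ?thesis by simp
qed



lemma ftc:
  fixes F f :: "real \<Rightarrow> real"
  assumes "a \<le> b" "\<And>x. (F has_real_derivative f x) (at x)"
  shows "(f has_integral (F b - F a)) {a..b}"
  using assms(1)
  by (rule fundamental_theorem_of_calculus)
     (use assms(2) in \<open>auto simp: has_real_derivative_iff_has_vector_derivative[symmetric] intro: has_field_derivative_at_within\<close>)

lemma split_u: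
  fixes F G1 G2 :: "real \<Rightarrow> real"
  assumes u: "0 \<le> u" "u \<le> 1"
    and e1: "\<And>t. t < u \<Longrightarrow> F t = G1 t" and e2: "\<And>t. u \<le> t \<Longrightarrow> F t = G2 t"
    and i1: "(G1 has_integral I1) {0..u}" and i2: "(G2 has_integral I2) {u..1}"
  shows "(F has_integral (I1 + I2)) {0..1}"
proof (rule has_integral_combine[OF u])
  show "(F has_integral I1) {0..u}"
    by (rule has_integral_spike_finite[of "{u}", OF _ _ i1]) (auto intro!: e1)
  show "(F has_integral I2) {u..1}"
    by (rule has_integral_spike_finite[of "{}", OF _ _ i2]) (auto intro!: e2)
qed

definition yc :: "nat \<Rightarrow> real \<Rightarrow> real" where
  "yc l u = - sqrt 2 * cos (pi * real l * u) / (pi * real l)"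

definition Aq :: "real \<Rightarrow> real" where
  "Aq u = (u^3 + (1 - u)^3) / 3"

lemma H1:
  assumes "0 \<le> u" "u \<le> 1"
  shows "((\<lambda>t. (sawbridge u t)^2) has_integral Aq u) {0..1}"
proof -
  have i1: "((\<lambda>t. t^2) has_integral (u^3/3 - 0^3/3)) {0..u}"
    by (rule ftc) (use assms in \<open>auto intro!: derivative_eq_intros simp: power2_eq_square\<close>)
  have i2: "((\<lambda>t. (t - 1)^2) has_integral ((1-1)^3/3 - (u-1)^3/3)) {u..1}"
    by (rule ftc) (use assms in \<open>auto intro!: derivative_eq_intros simp: power2_eq_square\<close>)
  have "((\<lambda>t. (sawbridge u t)^2) has_integral (u^3/3 - 0^3/3) + ((1-1)^3/3 - (u-1)^3/3)) {0..1}"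
    by (rule split_u[OF assms _ _ i1 i2]) (auto simp: sawbridge_def)
  moreover have "(u^3/3 - 0^3/3) + ((1-1)^3/3 - (u-1)^3/3) = Aq u"
    unfolding Aq_def by (simp add: power3_eq_cube field_simps)
  ultimately show ?thesis by simp
qed

lemma H2:
  assumes "0 \<le> u" "u \<le> 1" "l \<ge> 1"
  shows "((\<lambda>t. sawbridge u t * kl_phi l t) has_integral yc l u) {0..1}"
proof -
  define a where "a = pi * real l"
  have a0: "a > 0" using assms by (simp add: a_def)
  have sa: "sin a = 0" by (simp add: a_def)
  define F1 where "F1 t = sqrt 2 * (sin (a*t) / a^2 - t * cos (a*t) / a)" for t
  define F2 where "F2 t = sqrt 2 * (sin (a*t) / a^2 - (t - 1) * cos (a*t) / a)" for t
  have d1: "(F1 has_real_derivative t * (sqrt 2 * sin (a * t))) (at t)" for t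
    unfolding F1_def using a0
    by (auto intro!: derivative_eq_intros simp: field_simps power2_eq_square)
  have d2: "(F2 has_real_derivative (t - 1) * (sqrt 2 * sin (a * t))) (at t)" for t
    unfolding F2_def using a0
    by (auto intro!: derivative_eq_intros simp: field_simps power2_eq_square)
  have i1: "((\<lambda>t. t * (sqrt 2 * sin (a * t))) has_integral (F1 u - F1 0)) {0..u}"
    by (rule ftc[OF assms(1) d1])
  have i2: "((\<lambda>t. (t - 1) * (sqrt 2 * sin (a * t))) has_integral (F2 1 - F2 u)) {u..1}"
    by (rule ftc[OF assms(2) d2])
  have "((\<lambda>t. sawbridge u t * kl_phi l t) has_integral (F1 u - F1 0) + (F2 1 - F2 u)) {0..1}"
    by (rule split_u[OF assms(1,2) _ _ i1 i2]) (auto simp: sawbridge_def kl_phi_def a_def mult.assoc)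
  moreover have "(F1 u - F1 0) + (F2 1 - F2 u) = yc l u"
    using a0 sa by (simp add: F1_def F2_def yc_def a_def[symmetric] field_simps)
  ultimately show ?thesis by simp
qed

lemma H3:
  assumes "k \<ge> 1" "l \<ge> 1"
  shows "((\<lambda>t. kl_phi k t * kl_phi l t) has_integral (if k = l then 1 else 0)) {0..1}"
proof -
  define a where "a = pi * real k"
  define b where "b = pi * real l"
  have a0: "a > 0" using assms by (simp add: a_def)
  have e: "kl_phi k t * kl_phi l t = cos ((a - b) * t) - cos ((a + b) * t)" for t
  proof -
    have "kl_phi k t * kl_phi l t = (sqrt 2 * sqrt 2) * (sin (a*t) * sin (b*t))"
      by (simp add: kl_phi_def a_def b_def mult_ac)
    also have "\<dots> = 2 * ((cos (a*t - b*t) - cos (a*t + b*t)) / 2)"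
      by (simp add: sin_times_sin)
    finally show ?thesis by (simp add: algebra_simps)
  qed
  show ?thesis
  proof (cases "k = l")
    case True
    hence ab: "b = a" by (simp add: a_def b_def)
    define F where "F t = t - sin (2 * a * t) / (2 * a)" for t
    have d: "(F has_real_derivative (cos ((a - b) * t) - cos ((a + b) * t))) (at t)" for t
      unfolding F_def ab using a0
      by (auto intro!: derivative_eq_intros simp: field_simps)
    have "((\<lambda>t. cos ((a - b) * t) - cos ((a + b) * t)) has_integral (F 1 - F 0)) {0..1}"
      by (rule ftc[OF _ d]) simp
    moreover have "sin (2 * a) = 0"
      using sin_npi2[of "2 * k"] by (simp add: a_def mult.assoc mult.left_commute)
    ultimately show ?thesis using True e by (simp add: F_def)
  next
    case False
    have b0: "b > 0" using assms by (simp add: b_def)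
    have ab: "a - b \<noteq> 0" using False by (simp add: a_def b_def)
    define F where "F t = sin ((a - b) * t) / (a - b) - sin ((a + b) * t) / (a + b)" for t
    have d: "(F has_real_derivative (cos ((a - b) * t) - cos ((a + b) * t))) (at t)" for t
      unfolding F_def using a0 b0 ab
      by (auto intro!: derivative_eq_intros)
    have "((\<lambda>t. cos ((a - b) * t) - cos ((a + b) * t)) has_integral (F 1 - F 0)) {0..1}"
      by (rule ftc[OF _ d]) simp
    moreover have "sin (a - b) = 0"
      using sin_npi_int[of "int k - int l"] by (simp add: a_def b_def algebra_simps)
    moreover have "sin (a + b) = 0"
      using sin_npi2[of "k + l"] by (simp add: a_def b_def algebra_simps)
    ultimately show ?thesis using False e by (simp add: F_def)
  qed
qed



lemma K_ge1: "\<Delta> > 0 \<Longrightarrow> K_par \<Delta> \<ge> 1"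
proof -
  assume d: "\<Delta> > 0"
  have "sqrt (D_par \<Delta>) > 0" using d by (simp add: D_par_def)
  hence "1 / (pi * sqrt (D_par \<Delta>)) > 0" by simp
  hence "\<lceil>1 / (pi * sqrt (D_par \<Delta>))\<rceil> \<ge> 1" by (simp add: one_le_ceiling)
  thus ?thesis unfolding K_par_def by linarith
qed

lemma delta_pos: "\<Delta> > 0 \<Longrightarrow> delta_par \<Delta> > 0"
  using K_ge1[of \<Delta>] gamma_props by (simp add: delta_par_def)

lemma kl_coeff_eq:
  assumes u: "0 \<le> u" "u \<le> 1" and l: "l \<ge> 1"
  shows "kl_coeff l u = yc l u"
proof -
  have m: "(\<lambda>t. sawbridge u t * kl_phi l t) \<in> borel_measurable lborel"
    unfolding sawbridge_def kl_phi_def by measurable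
  have si: "set_integrable lborel {0..1} (\<lambda>t. sawbridge u t * kl_phi l t)"
    unfolding set_integrable_def
  proof (rule integrableI_bounded_set_indicator[where B=2])
    show "AE x in lborel. x \<in> {0..1} \<longrightarrow> norm (sawbridge u x * kl_phi l x) \<le> 2"
    proof (intro AE_I2 impI)
      fix x :: real assume x: "x \<in> {0..1}"
      have "\<bar>sawbridge u x\<bar> \<le> 1" using x by (auto simp: sawbridge_def)
      moreover have "\<bar>kl_phi l x\<bar> \<le> sqrt 2" by (simp add: kl_phi_def abs_mult)
      moreover have "sqrt 2 \<le> (2::real)" using real_sqrt_le_mono[of 2 4] real_sqrt_four by simp
      ultimately have "\<bar>sawbridge u x\<bar> * \<bar>kl_phi l x\<bar> \<le> 1 * 2"
        by (intro mult_mono) auto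
      thus "norm (sawbridge u x * kl_phi l x) \<le> 2" by (simp add: abs_mult)
    qed
  qed (use m in auto)
  have "kl_coeff l u = integral {0..1} (\<lambda>t. sawbridge u t * kl_phi l t)"
    unfolding kl_coeff_def using interval_integral_eq_integral[of 0 1 "\<lambda>t. sawbridge u t * kl_phi l t"] si by (simp add: zero_ereal_def one_ereal_def)
  also have "\<dots> = yc l u" using H2[OF u l] by (rule integral_unique)
  finally show ?thesis .
qed

definition lam :: "nat \<Rightarrow> real" where "lam l = 1 / (pi^2 * (real l)^2)"
definition s2 :: "real \<Rightarrow> real" where "s2 \<Delta> = (delta_par \<Delta>)^2 / 12"
definition alp :: "real \<Rightarrow> nat \<Rightarrow> real" where "alp \<Delta> l = lam l / (lam l + s2 \<Delta>)"
definition dec :: "real \<Rightarrow> (nat \<Rightarrow> int) \<Rightarrow> (nat \<Rightarrow> real) \<Rightarrow> real \<Rightarrow> real" where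
  "dec \<Delta> c d t = (\<Sum>l\<in>{1..K_par \<Delta>}. alp \<Delta> l * delta_par \<Delta> * (real_of_int (c l) - d l) * kl_phi l t)"
definition qe :: "real \<Rightarrow> real \<Rightarrow> real" where
  "qe z s = real_of_int (round (z + s)) - z - s"
definition yh :: "real \<Rightarrow> real \<Rightarrow> (nat \<Rightarrow> real) \<Rightarrow> nat \<Rightarrow> real" where
  "yh \<Delta> u d l = alp \<Delta> l * (yc l u + delta_par \<Delta> * qe (yc l u / delta_par \<Delta>) (d l))"
definition Gf :: "real \<Rightarrow> real \<Rightarrow> (nat \<Rightarrow> real) \<Rightarrow> real" where
  "Gf \<Delta> u d = Aq u - 2 * (\<Sum>l\<in>{1..K_par \<Delta>}. yh \<Delta> u d l * yc l u) + (\<Sum>l\<in>{1..K_par \<Delta>}. (yh \<Delta> u d l)^2)"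

lemma dec_enc:
  assumes d: "\<Delta> > 0" and u: "0 \<le> u" "u \<le> 1"
  shows "dec \<Delta> (encoder \<Delta> u e) e t = (\<Sum>l\<in>{1..K_par \<Delta>}. yh \<Delta> u e l * kl_phi l t)"
  unfolding dec_def
proof (rule sum.cong[OF refl])
  fix l assume l: "l \<in> {1..K_par \<Delta>}"
  have dp: "delta_par \<Delta> > 0" using delta_pos[OF d] .
  have "encoder \<Delta> u e l = round (yc l u / delta_par \<Delta> + e l)"
    using l kl_coeff_eq[OF u, of l] by (simp add: encoder_def)
  thus "alp \<Delta> l * delta_par \<Delta> * (real_of_int (encoder \<Delta> u e l) - e l) * kl_phi l t =
        yh \<Delta> u e l * kl_phi l t"
    using dp by (simp add: yh_def qe_def field_simps)
qed

lemma P2: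
  assumes u: "0 \<le> u" "u \<le> 1"
  shows "((\<lambda>t. (sawbridge u t - (\<Sum>l\<in>{1..K}. y l * kl_phi l t))^2) has_integral
          (Aq u - 2 * (\<Sum>l\<in>{1..K}. y l * yc l u) + (\<Sum>l\<in>{1..K}. (y l)^2))) {0..1}"
proof -
  have ex: "(sawbridge u t - (\<Sum>l\<in>{1..K}. y l * kl_phi l t))^2 =
     (sawbridge u t)^2 - 2 * (\<Sum>l\<in>{1..K}. y l * (sawbridge u t * kl_phi l t))
     + (\<Sum>k\<in>{1..K}. \<Sum>l\<in>{1..K}. y k * y l * (kl_phi k t * kl_phi l t))" for t
    by (simp add: power2_eq_square algebra_simps sum_distrib_left sum_distrib_right sum_product)
  have i1: "((\<lambda>t. (sawbridge u t)^2) has_integral Aq u) {0..1}" by (rule H1[OF u])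
  have i2: "((\<lambda>t. 2 * (\<Sum>l\<in>{1..K}. y l * (sawbridge u t * kl_phi l t))) has_integral
            2 * (\<Sum>l\<in>{1..K}. y l * yc l u)) {0..1}"
    by (intro has_integral_mult_right has_integral_sum) (auto intro!: H2 u)
  have i3: "((\<lambda>t. (\<Sum>k\<in>{1..K}. \<Sum>l\<in>{1..K}. y k * y l * (kl_phi k t * kl_phi l t))) has_integral
            (\<Sum>k\<in>{1..K}. \<Sum>l\<in>{1..K}. y k * y l * (if k = l then 1 else 0))) {0..1}"
    by (intro has_integral_sum has_integral_mult_right H3) auto
  have s3: "(\<Sum>k\<in>{1..K}. \<Sum>l\<in>{1..K}. y k * y l * (if k = l then 1 else 0)) = (\<Sum>l\<in>{1..K}. (y l)^2)"
    by (simp add: if_distrib power2_eq_square sum.delta cong: if_cong)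
  show ?thesis
    unfolding ex using has_integral_add[OF has_integral_diff[OF i1 i2] i3] s3 by simp
qed

lemma inner_eq:
  assumes d: "\<Delta> > 0" and u: "0 \<le> u" "u \<le> 1"
  shows "(\<integral>\<^sup>+ t\<in>{0..1}. ennreal ((sawbridge u t - dec \<Delta> (encoder \<Delta> u e) e t)^2) \<partial>lborel)
         = ennreal (Gf \<Delta> u e)"
proof -
  have hi: "((\<lambda>t. (sawbridge u t - dec \<Delta> (encoder \<Delta> u e) e t)^2) has_integral Gf \<Delta> u e) {0..1}"
    unfolding dec_enc[OF d u] Gf_def by (rule P2[OF u])
  have "(\<integral>\<^sup>+ t\<in>{0..1}. ennreal ((sawbridge u t - dec \<Delta> (encoder \<Delta> u e) e t)^2) \<partial>lborel)
     = (\<integral>\<^sup>+ t. ennreal (indicator {0..1} t * (sawbridge u t - dec \<Delta> (encoder \<Delta> u e) e t)^2) \<partial>lborel)"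
    by (intro nn_integral_cong) (auto split: split_indicator)
  also have "\<dots> = ennreal (Gf \<Delta> u e)"
    by (rule nn_integral_has_integral_lebesgue[OF _ hi]) simp
  finally show ?thesis .
qed

lemma Gf_nonneg:
  assumes d: "\<Delta> > 0" and u: "0 \<le> u" "u \<le> 1"
  shows "Gf \<Delta> u e \<ge> 0"
proof -
  have hi: "((\<lambda>t. (sawbridge u t - (\<Sum>l\<in>{1..K_par \<Delta>}. yh \<Delta> u e l * kl_phi l t))^2) has_integral Gf \<Delta> u e) {0..1}"
    unfolding Gf_def by (rule P2[OF u])
  show ?thesis by (rule has_integral_nonneg[OF hi]) simp
qed



lemma unif_int:
  fixes f :: "real \<Rightarrow> real" and a b :: real
  assumes ab: "b = a + 1" and fm: "f \<in> borel_measurable borel"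
    and bnd: "\<And>x. x \<in> {a..b} \<Longrightarrow> \<bar>f x\<bar> \<le> B" and hi: "(f has_integral I) {a..b}"
  shows "integral\<^sup>L (uniform_measure lborel {a..b}) f = I"
proof -
  have em: "emeasure lborel {a..b} = 1" using ab by simp
  have um: "uniform_measure lborel {a..b} = density lborel (\<lambda>x. ennreal (indicator {a..b} x))"
    unfolding uniform_measure_def em by (simp add: ennreal_indicator divide_ennreal_def)
  have fm': "f \<in> borel_measurable lborel" using fm by simp
  have si: "set_integrable lborel {a..b} f"
    unfolding set_integrable_def
    by (rule integrableI_bounded_set_indicator[where B=B]) (use fm bnd ab in auto)
  have "integral\<^sup>L (uniform_measure lborel {a..b}) f = integral\<^sup>L lborel (\<lambda>x. indicator {a..b} x *\<^sub>R f x)"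
    unfolding um by (rule integral_density) (use fm' in auto)
  also have "\<dots> = (LINT x:{a..b}|lborel. f x)" by (simp add: set_lebesgue_integral_def)
  also have "\<dots> = integral {a..b} f" by (rule set_borel_integral_eq_integral(2)[OF si])
  also have "\<dots> = I" using hi by (rule integral_unique)
  finally show ?thesis .
qed

lemma qe_meas[measurable]:
  assumes [measurable]: "f \<in> borel_measurable M" "g \<in> borel_measurable M"
  shows "(\<lambda>x. qe (f x) (g x)) \<in> borel_measurable M"
proof -
  have "(\<lambda>x. real_of_int \<lfloor>f x + g x + 1/2\<rfloor>) \<in> borel_measurable M"
    using measurable_compose[OF _ borel_measurable_real_floor, of "\<lambda>x. f x + g x + 1/2" M] by simp
  thus ?thesis unfolding qe_def round_def by measurable
qed

lemma qe_bound: "\<bar>qe z s\<bar> \<le> 1/2"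
  unfolding qe_def using of_int_round_abs_le[of "z + s"] by (simp add: diff_diff_eq)

lemma qe_pieces:
  fixes z :: real
  defines "c \<equiv> real_of_int \<lfloor>z\<rfloor> - z"
  defines "s0 \<equiv> c + 1/2"
  shows "-1/2 \<le> s0" "s0 \<le> 1/2"
    and "\<And>s. -1/2 \<le> s \<Longrightarrow> s < s0 \<Longrightarrow> qe z s = c - s"
    and "\<And>s. s0 \<le> s \<Longrightarrow> s \<le> 1/2 \<Longrightarrow> qe z s = c + 1 - s"
proof -
  have f1: "real_of_int \<lfloor>z\<rfloor> \<le> z" "z < real_of_int \<lfloor>z\<rfloor> + 1" by linarith+
  show "-1/2 \<le> s0" "s0 \<le> 1/2" using f1 unfolding s0_def c_def by linarith+
  show "qe z s = c - s" if "-1/2 \<le> s" "s < s0" for s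
  proof -
    have A: "real_of_int \<lfloor>z\<rfloor> \<le> z + s + 1/2" "z + s + 1/2 < real_of_int \<lfloor>z\<rfloor> + 1"
      using that f1 unfolding s0_def c_def by linarith+
    have "\<lfloor>z + s + 1/2\<rfloor> = \<lfloor>z\<rfloor>" by (rule floor_unique[OF A])
    thus ?thesis by (simp add: qe_def round_def c_def add.assoc)
  qed
  show "qe z s = c + 1 - s" if "s0 \<le> s" "s \<le> 1/2" for s
  proof -
    have A: "real_of_int (\<lfloor>z\<rfloor> + 1) \<le> z + s + 1/2" "z + s + 1/2 < real_of_int (\<lfloor>z\<rfloor> + 1) + 1"
      using that f1 unfolding s0_def c_def by simp_all linarith+
    have "\<lfloor>z + s + 1/2\<rfloor> = \<lfloor>z\<rfloor> + 1" by (rule floor_unique[OF A])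
    thus ?thesis by (simp add: qe_def round_def c_def add.assoc)
  qed
qed

lemma qe_split:
  fixes z :: real and g :: "real \<Rightarrow> real"
  defines "c \<equiv> real_of_int \<lfloor>z\<rfloor> - z"
  defines "s0 \<equiv> c + 1/2"
  assumes i1: "((\<lambda>s. g (c - s)) has_integral I1) {-1/2..s0}"
      and i2: "((\<lambda>s. g (c + 1 - s)) has_integral I2) {s0..1/2}"
  shows "((\<lambda>s. g (qe z s)) has_integral (I1 + I2)) {-1/2..1/2}"
proof (rule has_integral_combine)
  note qp = qe_pieces[of z, folded c_def, folded s0_def]
  show "-1/2 \<le> s0" "s0 \<le> 1/2" by (rule qp(1), rule qp(2))
  show "((\<lambda>s. g (qe z s)) has_integral I1) {-1/2..s0}"
  proof (rule has_integral_spike_finite[of "{s0}", OF _ _ i1])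
    fix x assume "x \<in> {-1/2..s0} - {s0}"
    hence "-1/2 \<le> x" "x < s0" by auto
    hence "qe z x = real_of_int \<lfloor>z\<rfloor> - z - x"
      by (intro qe_pieces(3)) (simp_all add: s0_def c_def)
    thus "g (qe z x) = g (c - x)" by (simp add: c_def)
  qed simp
  show "((\<lambda>s. g (qe z s)) has_integral I2) {s0..1/2}"
    by (rule has_integral_spike_finite[of "{}", OF _ _ i2]) (auto intro!: arg_cong[where f=g] qp(4))
qed

lemma qe_int1: "((\<lambda>s. qe z s) has_integral 0) {-1/2..1/2}"
proof -
  define c where "c = real_of_int \<lfloor>z\<rfloor> - z"
  define s0 where "s0 = c + 1/2"
  have s0b: "-1/2 \<le> s0" "s0 \<le> 1/2" using qe_pieces(1,2)[of z] by (simp_all add: c_def s0_def)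
  define F1 where "F1 s = c * s - s^2/2" for s
  define F2 where "F2 s = (c + 1) * s - s^2/2" for s
  have i1: "((\<lambda>s. (\<lambda>x. x) (c - s)) has_integral (F1 s0 - F1 (-1/2))) {-1/2..s0}"
    by (rule ftc[OF s0b(1)]) (auto simp: F1_def intro!: derivative_eq_intros)
  have i2: "((\<lambda>s. (\<lambda>x. x) (c + 1 - s)) has_integral (F2 (1/2) - F2 s0)) {s0..1/2}"
    by (rule ftc[OF s0b(2)]) (auto simp: F2_def intro!: derivative_eq_intros)
  have "((\<lambda>s. (\<lambda>x. x) (qe z s)) has_integral ((F1 s0 - F1 (-1/2)) + (F2 (1/2) - F2 s0))) {-1/2..1/2}"
    by (rule qe_split[OF i1[unfolded c_def s0_def] i2[unfolded c_def s0_def], folded c_def s0_def])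
  moreover have "(F1 s0 - F1 (-1/2)) + (F2 (1/2) - F2 s0) = 0"
    by (simp add: F1_def F2_def s0_def power2_eq_square field_simps)
  ultimately show ?thesis by simp
qed

lemma qe_int2: "((\<lambda>s. (qe z s)^2) has_integral 1/12) {-1/2..1/2}"
proof -
  define c where "c = real_of_int \<lfloor>z\<rfloor> - z"
  define s0 where "s0 = c + 1/2"
  have s0b: "-1/2 \<le> s0" "s0 \<le> 1/2" using qe_pieces(1,2)[of z] by (simp_all add: c_def s0_def)
  define F1 where "F1 s = (s - c)^3/3" for s
  define F2 where "F2 s = (s - c - 1)^3/3" for s
  have i1: "((\<lambda>s. (\<lambda>x. x^2) (c - s)) has_integral (F1 s0 - F1 (-1/2))) {-1/2..s0}"
    by (rule ftc[OF s0b(1)]) (auto simp: F1_def power2_eq_square field_simps intro!: derivative_eq_intros)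
  have i2: "((\<lambda>s. (\<lambda>x. x^2) (c + 1 - s)) has_integral (F2 (1/2) - F2 s0)) {s0..1/2}"
    by (rule ftc[OF s0b(2)]) (auto simp: F2_def power2_eq_square field_simps intro!: derivative_eq_intros)
  have "((\<lambda>s. (\<lambda>x. x^2) (qe z s)) has_integral ((F1 s0 - F1 (-1/2)) + (F2 (1/2) - F2 s0))) {-1/2..1/2}"
    by (rule qe_split[OF i1[unfolded c_def s0_def] i2[unfolded c_def s0_def], folded c_def s0_def])
  moreover have eq: "(F1 s0 - F1 (-1/2)) + (F2 (1/2) - F2 s0) = 1/12"
    by (simp add: F1_def F2_def s0_def power3_eq_cube field_simps)
  ultimately show ?thesis by (simp only: eq)
qed

lemma Aq_int: "(Aq has_integral 1/6) {0..1}"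
proof -
  define F where "F u = (u^4 - (1 - u)^4) / 12" for u :: real
  have d: "(F has_real_derivative Aq x) (at x)" for x
    unfolding F_def Aq_def by (auto intro!: derivative_eq_intros simp: power3_eq_cube power2_eq_square field_simps)
  have "(Aq has_integral (F 1 - F 0)) {0..1}"
    by (rule ftc[OF _ d]) simp
  thus ?thesis by (simp add: F_def)
qed

lemma yc2_int:
  assumes "l \<ge> 1"
  shows "((\<lambda>u. (yc l u)^2) has_integral lam l) {0..1}"
proof -
  define a where "a = pi * real l"
  have a0: "a > 0" using assms by (simp add: a_def)
  have e: "(yc l u)^2 = (1 + cos (2 * a * u)) / a^2" for u
  proof -
    have "(yc l u)^2 = 2 * (cos (a * u))^2 / a^2"
      by (simp add: yc_def a_def power_mult_distrib power_divide mult.assoc)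
    also have "\<dots> = (1 + cos (2 * a * u)) / a^2"
      by (simp add: cos_double_cos mult.assoc)
    finally show ?thesis .
  qed
  define F where "F u = (u + sin (2 * a * u) / (2 * a)) / a^2" for u
  have d: "(F has_real_derivative (1 + cos (2 * a * u)) / a^2) (at u)" for u
    unfolding F_def using a0 by (auto intro!: derivative_eq_intros simp: field_simps)
  have "((\<lambda>u. (1 + cos (2 * a * u)) / a^2) has_integral (F 1 - F 0)) {0..1}"
    by (rule ftc[OF _ d]) simp
  moreover have "sin (2 * a) = 0"
    using sin_npi2[of "2 * l"] by (simp add: a_def mult.assoc mult.left_commute)
  ultimately show ?thesis by (simp add: e F_def lam_def a_def power_mult_distrib)
qed



abbreviation "UU \<equiv> uniform_measure lborel {0..1::real}"
abbreviation "QQ \<equiv> uniform_measure lborel {-1/2..1/2::real}"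

lemma prob_UU: "prob_space UU"
  by (rule prob_space_uniform_measure) simp_all

lemma prob_QQ: "prob_space QQ"
  by (rule prob_space_uniform_measure) simp_all

lemma prob_PP: "prob_space (\<Pi>\<^sub>M l\<in>I. QQ)"
  by (rule prob_space_PiM) (rule prob_QQ)

lemma pps: "pair_prob_space UU (\<Pi>\<^sub>M l\<in>I. QQ)"
proof -
  interpret A: prob_space UU by (rule prob_UU)
  interpret B: prob_space "\<Pi>\<^sub>M l\<in>I. QQ" by (rule prob_PP)
  show ?thesis by unfold_locales
qed

lemma saw_prob: "prob_space (saw_space \<Delta>)"
proof -
  interpret pair_prob_space UU "\<Pi>\<^sub>M l\<in>{1..K_par \<Delta>}. QQ" by (rule pps)
  show ?thesis unfolding saw_space_def by (rule P.prob_space_axioms)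
qed

lemma AE_saw: "AE \<omega> in saw_space \<Delta>. fst \<omega> \<in> {0..1}"
proof -
  interpret P: prob_space "\<Pi>\<^sub>M l\<in>{1..K_par \<Delta>}. QQ" by (rule prob_PP)
  have "AE u in UU. u \<in> {0..1}" by (rule AE_uniform_measureI) auto
  hence "AE u in distr (UU \<Otimes>\<^sub>M (\<Pi>\<^sub>M l\<in>{1..K_par \<Delta>}. QQ)) UU fst. u \<in> {0..1}"
    by (simp only: P.distr_pair_fst)
  hence "AE \<omega> in UU \<Otimes>\<^sub>M (\<Pi>\<^sub>M l\<in>{1..K_par \<Delta>}. QQ). fst \<omega> \<in> {0..1}"
    using AE_distrD[of fst "UU \<Otimes>\<^sub>M (\<Pi>\<^sub>M l\<in>{1..K_par \<Delta>}. QQ)" UU "\<lambda>u. u \<in> {0..1}"]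
    by (auto simp del: atLeastAtMost_iff)
  thus ?thesis unfolding saw_space_def .
qed

lemma fub:
  fixes h :: "real \<Rightarrow> real \<Rightarrow> real"
  assumes l: "l \<in> {1..K_par \<Delta>}"
    and m1: "(\<lambda>\<omega>. h (fst \<omega>) (snd \<omega> l)) \<in> borel_measurable (saw_space \<Delta>)"
    and m2: "\<And>u. h u \<in> borel_measurable borel"
    and bnd: "\<And>u s. u \<in> {0..1} \<Longrightarrow> \<bar>h u s\<bar> \<le> B"
  shows "integrable (saw_space \<Delta>) (\<lambda>\<omega>. h (fst \<omega>) (snd \<omega> l))"
    and "integral\<^sup>L (saw_space \<Delta>) (\<lambda>\<omega>. h (fst \<omega>) (snd \<omega> l)) = (\<integral>u. (\<integral>s. h u s \<partial>QQ) \<partial>UU)"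
proof -
  interpret S: prob_space "saw_space \<Delta>" by (rule saw_prob)
  interpret PP: pair_prob_space UU "\<Pi>\<^sub>M l\<in>{1..K_par \<Delta>}. QQ" by (rule pps)
  show int: "integrable (saw_space \<Delta>) (\<lambda>\<omega>. h (fst \<omega>) (snd \<omega> l))"
  proof (rule S.integrable_const_bound[where B=B])
    show "AE x in saw_space \<Delta>. norm (h (fst x) (snd x l)) \<le> B"
      using AE_saw[of \<Delta>] by eventually_elim (use bnd in auto)
  qed (rule m1)
  have "integral\<^sup>L (saw_space \<Delta>) (\<lambda>\<omega>. h (fst \<omega>) (snd \<omega> l))
      = (\<integral>u. (\<integral>d. h u (d l) \<partial>(\<Pi>\<^sub>M l\<in>{1..K_par \<Delta>}. QQ)) \<partial>UU)"
    using PP.integral_fst'[of "\<lambda>\<omega>. h (fst \<omega>) (snd \<omega> l)"] int by (simp add: saw_space_def)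
  also have "\<dots> = (\<integral>u. (\<integral>s. h u s \<partial>QQ) \<partial>UU)"
  proof (rule Bochner_Integration.integral_cong[OF refl])
    fix u
    have "(\<integral>s. h u s \<partial>QQ) = (\<integral>s. h u s \<partial>distr (\<Pi>\<^sub>M l\<in>{1..K_par \<Delta>}. QQ) QQ (\<lambda>d. d l))"
      by (subst distr_PiM_component[OF prob_QQ l]) simp
    also have "\<dots> = (\<integral>d. h u (d l) \<partial>(\<Pi>\<^sub>M l\<in>{1..K_par \<Delta>}. QQ))"
      by (rule integral_distr) (use l m2 in auto)
    finally show "(\<integral>d. h u (d l) \<partial>(\<Pi>\<^sub>M l\<in>{1..K_par \<Delta>}. QQ)) = (\<integral>s. h u s \<partial>QQ)" by simp
  qed
  finally show "integral\<^sup>L (saw_space \<Delta>) (\<lambda>\<omega>. h (fst \<omega>) (snd \<omega> l)) = (\<integral>u. (\<integral>s. h u s \<partial>QQ) \<partial>UU)" .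
qed



definition T :: "real \<Rightarrow> nat \<Rightarrow> real \<Rightarrow> real \<Rightarrow> real" where
  "T \<Delta> l u s = ((alp \<Delta> l)^2 - 2 * alp \<Delta> l) * (yc l u)^2
     + (2 * (alp \<Delta> l)^2 * delta_par \<Delta> - 2 * alp \<Delta> l * delta_par \<Delta>) * yc l u * qe (yc l u / delta_par \<Delta>) s
     + (alp \<Delta> l)^2 * (delta_par \<Delta>)^2 * (qe (yc l u / delta_par \<Delta>) s)^2"

lemma Gf_T: "Gf \<Delta> u d = Aq u + (\<Sum>l\<in>{1..K_par \<Delta>}. T \<Delta> l u (d l))"
proof -
  have "Gf \<Delta> u d = Aq u + (\<Sum>l\<in>{1..K_par \<Delta>}. (yh \<Delta> u d l)^2 - 2 * (yh \<Delta> u d l * yc l u))"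
    by (simp add: Gf_def sum_subtractf sum_distrib_left)
  also have "(\<Sum>l\<in>{1..K_par \<Delta>}. (yh \<Delta> u d l)^2 - 2 * (yh \<Delta> u d l * yc l u)) = (\<Sum>l\<in>{1..K_par \<Delta>}. T \<Delta> l u (d l))"
    by (rule sum.cong) (simp_all add: yh_def T_def power2_eq_square algebra_simps)
  finally show ?thesis .
qed

lemma yc_bound: "l \<ge> 1 \<Longrightarrow> \<bar>yc l u\<bar> \<le> 1"
proof -
  assume l: "l \<ge> 1"
  have "\<bar>yc l u\<bar> = sqrt 2 * \<bar>cos (pi * real l * u)\<bar> / (pi * real l)"
    using l by (simp add: yc_def abs_mult abs_divide)
  also have "\<dots> \<le> sqrt 2 * 1 / (pi * 1)"
    using l by (intro frac_le mult_left_mono mult_left_mono) auto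
  also have "\<dots> \<le> 1"
  proof -
    have "sqrt 2 \<le> (2::real)" using real_sqrt_le_mono[of 2 4] real_sqrt_four by simp
    thus ?thesis using pi_gt3 by simp
  qed
  finally show ?thesis .
qed

lemma abs_quad_bound:
  fixes A B C y e :: real
  assumes y: "\<bar>y\<bar> \<le> 1" and e: "\<bar>e\<bar> \<le> 1/2"
  shows "\<bar>A * y^2 + B * y * e + C * e^2\<bar> \<le> \<bar>A\<bar> + \<bar>B\<bar> + \<bar>C\<bar>"
proof -
  have y2: "\<bar>y\<bar> * \<bar>y\<bar> \<le> 1 * 1" using y by (intro mult_mono) auto
  have ye: "\<bar>y\<bar> * \<bar>e\<bar> \<le> 1 * 1" using y e by (intro mult_mono) auto
  have e2: "\<bar>e\<bar> * \<bar>e\<bar> \<le> 1 * 1" using e by (intro mult_mono) auto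
  have t1: "\<bar>A * y^2\<bar> \<le> \<bar>A\<bar>"
  proof -
    have "\<bar>A * y^2\<bar> = \<bar>A\<bar> * (\<bar>y\<bar> * \<bar>y\<bar>)" by (simp add: abs_mult power2_eq_square)
    also have "\<dots> \<le> \<bar>A\<bar> * 1" using y2 by (intro mult_left_mono) auto
    finally show ?thesis by simp
  qed
  have t2: "\<bar>B * y * e\<bar> \<le> \<bar>B\<bar>"
  proof -
    have "\<bar>B * y * e\<bar> = \<bar>B\<bar> * (\<bar>y\<bar> * \<bar>e\<bar>)" by (simp add: abs_mult)
    also have "\<dots> \<le> \<bar>B\<bar> * 1" using ye by (intro mult_left_mono) auto
    finally show ?thesis by simp
  qed
  have t3: "\<bar>C * e^2\<bar> \<le> \<bar>C\<bar>"
  proof -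
    have "\<bar>C * e^2\<bar> = \<bar>C\<bar> * (\<bar>e\<bar> * \<bar>e\<bar>)" by (simp add: abs_mult power2_eq_square)
    also have "\<dots> \<le> \<bar>C\<bar> * 1" using e2 by (intro mult_left_mono) auto
    finally show ?thesis by simp
  qed
  have "\<bar>A * y^2 + B * y * e + C * e^2\<bar> \<le> \<bar>A * y^2\<bar> + \<bar>B * y * e\<bar> + \<bar>C * e^2\<bar>"
    by (rule order_trans[OF abs_triangle_ineq add_mono[OF abs_triangle_ineq order_refl]])
  thus ?thesis using t1 t2 t3 by linarith
qed

lemma T_bound: "l \<ge> 1 \<Longrightarrow> \<bar>T \<Delta> l u s\<bar> \<le>
   \<bar>(alp \<Delta> l)^2 - 2 * alp \<Delta> l\<bar> + \<bar>2 * (alp \<Delta> l)^2 * delta_par \<Delta> - 2 * alp \<Delta> l * delta_par \<Delta>\<bar>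
   + \<bar>(alp \<Delta> l)^2 * (delta_par \<Delta>)^2\<bar>"
  unfolding T_def by (rule abs_quad_bound[OF yc_bound qe_bound])

lemma T_meas[measurable]:
  assumes [measurable]: "f \<in> borel_measurable M" "g \<in> borel_measurable M"
  shows "(\<lambda>x. T \<Delta> l (f x) (g x)) \<in> borel_measurable M"
  unfolding T_def yc_def by measurable


lemma T_inner:
  assumes l: "l \<ge> 1"
  shows "(\<integral>s. T \<Delta> l u s \<partial>QQ) = ((alp \<Delta> l)^2 - 2 * alp \<Delta> l) * (yc l u)^2 + (alp \<Delta> l)^2 * (delta_par \<Delta>)^2 / 12"
proof (rule unif_int)
  show "(1/2::real) = -1/2 + 1" by simp
  show "T \<Delta> l u \<in> borel_measurable borel" by (intro T_meas) auto
  show "\<bar>T \<Delta> l u s\<bar> \<le> \<bar>(alp \<Delta> l)^2 - 2 * alp \<Delta> l\<bar> + \<bar>2 * (alp \<Delta> l)^2 * delta_par \<Delta> - 2 * alp \<Delta> l * delta_par \<Delta>\<bar>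
   + \<bar>(alp \<Delta> l)^2 * (delta_par \<Delta>)^2\<bar>" for s by (rule T_bound[OF l])
  define A where "A = ((alp \<Delta> l)^2 - 2 * alp \<Delta> l) * (yc l u)^2"
  define B where "B = (2 * (alp \<Delta> l)^2 * delta_par \<Delta> - 2 * alp \<Delta> l * delta_par \<Delta>) * yc l u"
  define C where "C = (alp \<Delta> l)^2 * (delta_par \<Delta>)^2"
  define z where "z = yc l u / delta_par \<Delta>"
  have e: "T \<Delta> l u = (\<lambda>s. A + B * qe z s + C * (qe z s)^2)"
    by (auto simp: T_def A_def B_def C_def z_def)
  have c1: "((\<lambda>s. A) has_integral A) {-1/2..1/2::real}"
    using has_integral_const_real[of A "-1/2" "1/2"] by simp
  have "((\<lambda>s. A + B * qe z s + C * (qe z s)^2) has_integral (A + B * 0 + C * (1/12))) {-1/2..1/2}"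
    by (intro has_integral_add c1 has_integral_mult_right qe_int1 qe_int2)
  thus "(T \<Delta> l u has_integral ((alp \<Delta> l)^2 - 2 * alp \<Delta> l) * (yc l u)^2 + (alp \<Delta> l)^2 * (delta_par \<Delta>)^2 / 12) {-1/2..1/2}"
    unfolding e by (simp add: A_def C_def)
qed


lemma outer_int:
  assumes l: "l \<ge> 1"
  shows "(\<integral>u. ((alp \<Delta> l)^2 - 2 * alp \<Delta> l) * (yc l u)^2 + (alp \<Delta> l)^2 * (delta_par \<Delta>)^2 / 12 \<partial>UU)
     = ((alp \<Delta> l)^2 - 2 * alp \<Delta> l) * lam l + (alp \<Delta> l)^2 * (delta_par \<Delta>)^2 / 12"
proof (rule unif_int)
  show "(1::real) = 0 + 1" by simp
  show "(\<lambda>u. ((alp \<Delta> l)^2 - 2 * alp \<Delta> l) * (yc l u)^2 + (alp \<Delta> l)^2 * (delta_par \<Delta>)^2 / 12) \<in> borel_measurable borel"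
    unfolding yc_def by measurable
  show "\<bar>((alp \<Delta> l)^2 - 2 * alp \<Delta> l) * (yc l u)^2 + (alp \<Delta> l)^2 * (delta_par \<Delta>)^2 / 12\<bar>
     \<le> \<bar>(alp \<Delta> l)^2 - 2 * alp \<Delta> l\<bar> + \<bar>0\<bar> + \<bar>(alp \<Delta> l)^2 * (delta_par \<Delta>)^2 / 12\<bar>" for u
  proof -
    have y2: "\<bar>yc l u\<bar>^2 \<le> 1" by (rule power_le_one[OF abs_ge_zero yc_bound[OF l]])
    have "\<bar>((alp \<Delta> l)^2 - 2 * alp \<Delta> l) * (yc l u)^2\<bar> = \<bar>(alp \<Delta> l)^2 - 2 * alp \<Delta> l\<bar> * \<bar>yc l u\<bar>^2"
      by (simp add: abs_mult power2_abs)
    also have "\<dots> \<le> \<bar>(alp \<Delta> l)^2 - 2 * alp \<Delta> l\<bar> * 1" using y2 by (intro mult_left_mono) auto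
    finally show ?thesis
      using abs_triangle_ineq[of "((alp \<Delta> l)^2 - 2 * alp \<Delta> l) * (yc l u)^2" "(alp \<Delta> l)^2 * (delta_par \<Delta>)^2 / 12"]
      by simp
  qed
  have c1: "((\<lambda>s. (alp \<Delta> l)^2 * (delta_par \<Delta>)^2 / 12) has_integral (alp \<Delta> l)^2 * (delta_par \<Delta>)^2 / 12) {0..1::real}"
    using has_integral_const_real[of "(alp \<Delta> l)^2 * (delta_par \<Delta>)^2 / 12" 0 1] by simp
  show "((\<lambda>u. ((alp \<Delta> l)^2 - 2 * alp \<Delta> l) * (yc l u)^2 + (alp \<Delta> l)^2 * (delta_par \<Delta>)^2 / 12) has_integral
     ((alp \<Delta> l)^2 - 2 * alp \<Delta> l) * lam l + (alp \<Delta> l)^2 * (delta_par \<Delta>)^2 / 12) {0..1}"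
    by (intro has_integral_add c1 has_integral_mult_right yc2_int l)
qed



lemma K_real_ge: assumes d: "\<Delta> > 0" shows "real (K_par \<Delta>) \<ge> 2 / (pi^2 * \<Delta>)"
proof -
  have sD: "sqrt (D_par \<Delta>) = \<Delta> * pi / 2"
    using d by (simp add: D_par_def real_sqrt_divide real_sqrt_mult power_mult_distrib[symmetric])
  have "1 / (pi * sqrt (D_par \<Delta>)) = 2 / (pi^2 * \<Delta>)"
    using d by (simp add: sD power2_eq_square field_simps)
  moreover have "real (K_par \<Delta>) \<ge> 1 / (pi * sqrt (D_par \<Delta>))"
    unfolding K_par_def by linarith
  ultimately show ?thesis by simp
qed

lemma alg_id:
  fixes L S :: real assumes "L > 0" "S > 0"
  shows "((L/(L+S))^2 - 2*(L/(L+S)))*L + (L/(L+S))^2*S = -L + L*S/(L+S)"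
proof -
  have "((L/(L+S))^2 - 2*(L/(L+S)))*L + (L/(L+S))^2*S = (L/(L+S))^2 * (L + S) - 2*(L/(L+S))*L"
    by (simp add: algebra_simps)
  also have "(L/(L+S))^2 * (L + S) = L * L / (L + S)" using assms by (simp add: power2_eq_square)
  also have "L * L / (L + S) - 2*(L/(L+S))*L = - L * L / (L + S)" by (simp add: field_simps)
  also have "- L * L / (L + S) = -L + L*S/(L+S)" using assms by (simp add: field_simps)
  finally show ?thesis .
qed

lemma final_num:
  assumes d: "\<Delta> > 0"
  shows "1/6 + (\<Sum>l\<in>{1..K_par \<Delta>}. ((alp \<Delta> l)^2 - 2 * alp \<Delta> l) * lam l + (alp \<Delta> l)^2 * (delta_par \<Delta>)^2 / 12) \<le> \<Delta>"
proof -
  define K where "K = K_par \<Delta>"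
  define g where "g = gamma_saw"
  have K1: "K \<ge> 1" using K_ge1[OF d] by (simp add: K_def)
  have g0: "g > 0" and fp: "arctan (pi * sqrt g) = 1 / (pi * sqrt g)" using gamma_props by (simp_all add: g_def)
  have Kp: "real K > 0" using K1 by simp
  have s2e: "s2 \<Delta> = g / (real K)^2"
    using g0 by (simp add: s2_def delta_par_def K_def g_def power_divide)
  have trm: "((alp \<Delta> l)^2 - 2 * alp \<Delta> l) * lam l + (alp \<Delta> l)^2 * (delta_par \<Delta>)^2 / 12
      = - lam l + g / ((real K)^2 + g * pi^2 * (real l)^2)" if l: "l \<ge> 1" for l
  proof -
    have lp: "lam l > 0" using l by (simp add: lam_def)
    have sp: "s2 \<Delta> > 0" using g0 Kp by (simp add: s2e)
    have a: "((alp \<Delta> l)^2 - 2 * alp \<Delta> l) * lam l + (alp \<Delta> l)^2 * (delta_par \<Delta>)^2 / 12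
        = - lam l + lam l * s2 \<Delta> / (lam l + s2 \<Delta>)"
      using alg_id[OF lp sp] by (simp add: alp_def s2_def)
    have b: "lam l * s2 \<Delta> / (lam l + s2 \<Delta>) = g / ((real K)^2 + g * pi^2 * (real l)^2)"
      using l Kp g0 by (simp add: lam_def s2e field_simps power2_eq_square)
    show ?thesis using a b by simp
  qed
  have "(\<Sum>l\<in>{1..K}. ((alp \<Delta> l)^2 - 2 * alp \<Delta> l) * lam l + (alp \<Delta> l)^2 * (delta_par \<Delta>)^2 / 12)
      = - (\<Sum>l\<in>{1..K}. lam l) + (\<Sum>l=1..K. g / ((real K)^2 + g * pi^2 * (real l)^2))"
    by (simp add: trm sum_subtractf)
  moreover have "(\<Sum>l=1..K. g / ((real K)^2 + g * pi^2 * (real l)^2)) \<le> 1 / (pi^2 * real K)"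
    by (rule wiener_sum[OF K1 g0 fp])
  moreover have "1/6 - (\<Sum>l\<in>{1..K}. lam l) \<le> 1 / (pi^2 * real K)"
  proof -
    have "(\<Sum>l\<in>{1..K}. lam l) = (\<Sum>l=1..K. 1 / (real l)^2) / pi^2"
      by (simp add: lam_def sum_divide_distrib mult.commute)
    moreover have "pi^2/6 \<le> (\<Sum>l=1..K. 1 / (real l)^2) + 1 / real K" by (rule tail_sq[OF K1])
    hence "pi^2/6 / pi^2 \<le> ((\<Sum>l=1..K. 1 / (real l)^2) + 1 / real K) / pi^2"
      by (rule divide_right_mono) simp
    hence "1/6 \<le> (\<Sum>l=1..K. 1 / (real l)^2) / pi^2 + 1 / (pi^2 * real K)"
      by (simp add: add_divide_distrib mult.commute)
    ultimately show ?thesis by linarith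
  qed
  moreover have "2 / (pi^2 * real K) \<le> \<Delta>"
  proof -
    have "real K \<ge> 2 / (pi^2 * \<Delta>)" using K_real_ge[OF d] by (simp add: K_def)
    thus ?thesis using d Kp by (simp add: field_simps)
  qed
  ultimately show ?thesis unfolding K_def by simp
qed



lemma snd_l_meas:
  assumes l: "l \<in> {1..K_par \<Delta>}"
  shows "(\<lambda>\<omega>. snd \<omega> l) \<in> borel_measurable (saw_space \<Delta>)"
proof -
  have "(\<lambda>\<omega>. snd \<omega> l) \<in> measurable (UU \<Otimes>\<^sub>M (\<Pi>\<^sub>M l\<in>{1..K_par \<Delta>}. QQ)) QQ"
    by (rule measurable_compose[OF measurable_snd measurable_component_singleton[OF l]])
  thus ?thesis unfolding saw_space_def by (simp add: measurable_cong_sets[OF refl sets_uniform_measure])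
qed

lemma fst_meas: "fst \<in> borel_measurable (saw_space \<Delta>)"
proof -
  have "fst \<in> measurable (UU \<Otimes>\<^sub>M (\<Pi>\<^sub>M l\<in>{1..K_par \<Delta>}. QQ)) UU" by (rule measurable_fst)
  thus ?thesis unfolding saw_space_def by (simp add: measurable_cong_sets[OF refl sets_uniform_measure])
qed

lemma Aq_bound: "u \<in> {0..1} \<Longrightarrow> \<bar>Aq u\<bar> \<le> 1"
proof -
  assume u: "u \<in> {0..1}"
  have a: "u^3 \<le> 1" "0 \<le> u^3" using u by (auto intro: power_le_one)
  have b: "(1-u)^3 \<le> 1" "0 \<le> (1-u)^3" using u by (auto intro: power_le_one)
  show ?thesis using a b by (simp add: Aq_def)
qed

lemma Aq_meas[measurable]: "Aq \<in> borel_measurable borel"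
  unfolding Aq_def by measurable

lemma int_Gf:
  assumes d: "\<Delta> > 0"
  shows "integrable (saw_space \<Delta>) (\<lambda>\<omega>. Gf \<Delta> (fst \<omega>) (snd \<omega>))"
    and "integral\<^sup>L (saw_space \<Delta>) (\<lambda>\<omega>. Gf \<Delta> (fst \<omega>) (snd \<omega>))
      = 1/6 + (\<Sum>l\<in>{1..K_par \<Delta>}. ((alp \<Delta> l)^2 - 2 * alp \<Delta> l) * lam l + (alp \<Delta> l)^2 * (delta_par \<Delta>)^2 / 12)"
proof -
  have one: "1 \<in> {1..K_par \<Delta>}" using K_ge1[OF d] by simp
  note fm = fst_meas[of \<Delta>]
  have mA: "(\<lambda>\<omega>. Aq (fst \<omega>)) \<in> borel_measurable (saw_space \<Delta>)"
    using measurable_compose[OF fm Aq_meas] by simp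
  have fA: "integrable (saw_space \<Delta>) (\<lambda>\<omega>. (\<lambda>u s. Aq u) (fst \<omega>) (snd \<omega> 1))"
    "integral\<^sup>L (saw_space \<Delta>) (\<lambda>\<omega>. (\<lambda>u s. Aq u) (fst \<omega>) (snd \<omega> 1)) = (\<integral>u. (\<integral>s. (\<lambda>u s. Aq u) u s \<partial>QQ) \<partial>UU)"
    by (rule fub[OF one _ _ Aq_bound]; use mA in simp)+
  have innerA: "(\<integral>s. Aq u \<partial>QQ) = Aq u" for u
    by (rule unif_int[where B="\<bar>Aq u\<bar>"]) (auto intro: has_integral_const_real[of "Aq u" "-1/2" "1/2", simplified])
  have outerA: "(\<integral>u. Aq u \<partial>UU) = 1/6"
    by (rule unif_int[OF _ Aq_meas Aq_bound Aq_int]) auto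
  have IA: "integral\<^sup>L (saw_space \<Delta>) (\<lambda>\<omega>. Aq (fst \<omega>)) = 1/6"
    using fA(2) innerA outerA by simp
  have fT: "integrable (saw_space \<Delta>) (\<lambda>\<omega>. T \<Delta> l (fst \<omega>) (snd \<omega> l)) \<and>
     integral\<^sup>L (saw_space \<Delta>) (\<lambda>\<omega>. T \<Delta> l (fst \<omega>) (snd \<omega> l))
      = ((alp \<Delta> l)^2 - 2 * alp \<Delta> l) * lam l + (alp \<Delta> l)^2 * (delta_par \<Delta>)^2 / 12"
    if l: "l \<in> {1..K_par \<Delta>}" for l
  proof -
    have l1: "l \<ge> 1" using l by simp
    have m1: "(\<lambda>\<omega>. T \<Delta> l (fst \<omega>) (snd \<omega> l)) \<in> borel_measurable (saw_space \<Delta>)"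
      by (rule T_meas[OF fm snd_l_meas[OF l]])
    have m2: "T \<Delta> l u \<in> borel_measurable borel" for u by (intro T_meas) auto
    note f = fub[OF l m1 m2 T_bound[OF l1]]
    show ?thesis
      using f T_inner[OF l1] outer_int[OF l1] by simp
  qed
  have eq: "(\<lambda>\<omega>. Gf \<Delta> (fst \<omega>) (snd \<omega>)) = (\<lambda>\<omega>. Aq (fst \<omega>) + (\<Sum>l\<in>{1..K_par \<Delta>}. T \<Delta> l (fst \<omega>) (snd \<omega> l)))"
    by (simp add: Gf_T)
  have iA: "integrable (saw_space \<Delta>) (\<lambda>\<omega>. Aq (fst \<omega>))" using fA(1) by simp
  have iS: "integrable (saw_space \<Delta>) (\<lambda>\<omega>. \<Sum>l\<in>{1..K_par \<Delta>}. T \<Delta> l (fst \<omega>) (snd \<omega> l))"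
    using fT by (intro Bochner_Integration.integrable_sum) auto
  show "integrable (saw_space \<Delta>) (\<lambda>\<omega>. Gf \<Delta> (fst \<omega>) (snd \<omega>))"
    unfolding eq using iA iS by (rule Bochner_Integration.integrable_add)
  have "integral\<^sup>L (saw_space \<Delta>) (\<lambda>\<omega>. Gf \<Delta> (fst \<omega>) (snd \<omega>))
      = integral\<^sup>L (saw_space \<Delta>) (\<lambda>\<omega>. Aq (fst \<omega>)) + (\<Sum>l\<in>{1..K_par \<Delta>}. integral\<^sup>L (saw_space \<Delta>) (\<lambda>\<omega>. T \<Delta> l (fst \<omega>) (snd \<omega> l)))"
    unfolding eq using iA iS fT by (simp add: Bochner_Integration.integral_sum)
  also have "\<dots> = 1/6 + (\<Sum>l\<in>{1..K_par \<Delta>}. ((alp \<Delta> l)^2 - 2 * alp \<Delta> l) * lam l + (alp \<Delta> l)^2 * (delta_par \<Delta>)^2 / 12)"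
    using IA fT by simp
  finally show "integral\<^sup>L (saw_space \<Delta>) (\<lambda>\<omega>. Gf \<Delta> (fst \<omega>) (snd \<omega>))
      = 1/6 + (\<Sum>l\<in>{1..K_par \<Delta>}. ((alp \<Delta> l)^2 - 2 * alp \<Delta> l) * lam l + (alp \<Delta> l)^2 * (delta_par \<Delta>)^2 / 12)" .
qed

lemma dec_in: "dec \<Delta> \<in> decoders \<Delta>"
proof -
  define M where "M = ((\<Pi>\<^sub>M l\<in>{1..K_par \<Delta>}. count_space (UNIV :: int set)) \<Otimes>\<^sub>M (\<Pi>\<^sub>M l\<in>{1..K_par \<Delta>}. (lborel :: real measure))) \<Otimes>\<^sub>M (lborel :: real measure)"
  have m: "(\<lambda>x. \<Sum>l\<in>{1..K_par \<Delta>}. alp \<Delta> l * delta_par \<Delta> * (real_of_int ((fst (fst x) :: nat \<Rightarrow> int) l) - snd (fst x) l) * kl_phi l (snd x))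
        \<in> borel_measurable M"
  proof (rule borel_measurable_sum)
    fix l assume l: "l \<in> {1..K_par \<Delta>}"
    have c: "(\<lambda>x. (fst (fst x) :: nat \<Rightarrow> int) l) \<in> measurable M (count_space UNIV)"
      unfolding M_def
      by (rule measurable_compose[OF measurable_compose[OF measurable_fst measurable_fst] measurable_component_singleton[OF l]])
    have c': "(\<lambda>x. real_of_int ((fst (fst x) :: nat \<Rightarrow> int) l)) \<in> borel_measurable M"
      by (rule measurable_compose[OF c]) simp
    have d: "(\<lambda>x. (snd (fst x) :: nat \<Rightarrow> real) l) \<in> measurable M lborel"
      unfolding M_def
      by (rule measurable_compose[OF measurable_compose[OF measurable_fst measurable_snd] measurable_component_singleton[OF l]])
    have d': "(\<lambda>x. (snd (fst x) :: nat \<Rightarrow> real) l) \<in> borel_measurable M"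
      using d by simp
    have t: "(\<lambda>x. snd x :: real) \<in> borel_measurable M" unfolding M_def by simp
    show "(\<lambda>x. alp \<Delta> l * delta_par \<Delta> * (real_of_int ((fst (fst x) :: nat \<Rightarrow> int) l) - snd (fst x) l) * kl_phi l (snd x))
        \<in> borel_measurable M"
      unfolding kl_phi_def using c' d' t by measurable
  qed
  have "(\<lambda>((c, d), t). dec \<Delta> c d t) = (\<lambda>x. \<Sum>l\<in>{1..K_par \<Delta>}. alp \<Delta> l * delta_par \<Delta> * (real_of_int ((fst (fst x) :: nat \<Rightarrow> int) l) - snd (fst x) l) * kl_phi l (snd x))"
    by (auto simp: dec_def)
  thus ?thesis using m unfolding decoders_def M_def by simp
qed

theorem lemma1:
  fixes \<Delta> :: real
  assumes "0 < \<Delta>" and "\<Delta> < 1/6"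
  shows "distortion \<Delta> \<le> ennreal \<Delta>"
proof -
  have d: "\<Delta> > 0" using assms(1) .
  have "distortion \<Delta> \<le> mse \<Delta> (dec \<Delta>)"
    unfolding distortion_def by (rule INF_lower[OF dec_in])
  also have "mse \<Delta> (dec \<Delta>) \<le> (\<integral>\<^sup>+ \<omega>. ennreal (Gf \<Delta> (fst \<omega>) (snd \<omega>)) \<partial>saw_space \<Delta>)"
    unfolding mse_def
  proof (rule nn_integral_mono_AE)
    show "AE \<omega> in saw_space \<Delta>. (\<integral>\<^sup>+ t\<in>{0..1}. ennreal ((sawbridge (fst \<omega>) t - dec \<Delta> (encoder \<Delta> (fst \<omega>) (snd \<omega>)) (snd \<omega>) t)^2) \<partial>lborel)
        \<le> ennreal (Gf \<Delta> (fst \<omega>) (snd \<omega>))"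
      using AE_saw[of \<Delta>] by eventually_elim (simp add: inner_eq[OF d])
  qed
  also have "\<dots> = ennreal (integral\<^sup>L (saw_space \<Delta>) (\<lambda>\<omega>. Gf \<Delta> (fst \<omega>) (snd \<omega>)))"
  proof (rule nn_integral_eq_integral[OF int_Gf(1)[OF d]])
    show "AE \<omega> in saw_space \<Delta>. 0 \<le> Gf \<Delta> (fst \<omega>) (snd \<omega>)"
      using AE_saw[of \<Delta>] by eventually_elim (simp add: Gf_nonneg[OF d])
  qed
  also have "\<dots> \<le> ennreal \<Delta>"
    using int_Gf(2)[OF d] final_num[OF d] by (simp add: ennreal_leI)
  finally show ?thesis .
qed


end
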